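(* Let $1\le s<\infty$, $r>1$, let $G_1,G_2\subset\mathbb{R}^n$ be bounded $L^s(\mu)$-averaging domains with $G_1\cap G_2\neq\emptyset$, where $d\mu=w(z)\,dz$ and $w\in A_r(G_1\cup G_2)$. Then $G_1\cup G_2$ is an $L^s(\mu)$-averaging domain.
   Context: A weight $w\ge0$ satisfies the $A_r$ condition on a domain $\Omega$ ($r>1$), written $w\in A_r(\Omega)$, if $\sup_{B\subset\Omega}\left(\frac{1}{|B|}\int_Bw\,dz\right)\left(\frac{1}{|B|}\int_Bw^{\frac{1}{1-r}}\,dz\right)^{r-1}<\infty$, the supremum over balls $B\subset\Omega$. The measure $\mu$ is $d\mu=w\,dz$. A bounded domain $\Omega$ is $L^s(\mu)$-averaging if there is a constant $C$ such that for all $u\in L^1_{\mathrm{loc}}(\Omega,\mu)$, $\left(\frac{1}{\mu(\Omega)}\int_\Omega|u-u_{\Omega}|^s\,d\mu\right)^{1/s}\le C\left(\sup_{B\subset\Omega}\frac{1}{\mu(B)}\int_B|u-u_B|^s\,d\mu\right)^{1/s}$, where $B$ ranges over open balls in $\Omega$ and $u_E=\frac{1}{\mu(E)}\int_Eu\,d\mu$. (Equivalently, for $w\in A_r$, $\Omega$ is $L^s(\mu)$-averaging iff $\frac{1}{\mu(\Omega)}\int_\Omega k(z,z_0;\Omega)^s\,d\mu<\infty$ for some $z_0\in\Omega$, where $k$ is the quasihyperbolic distance.) *)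

theory Defs
  imports "HOL-Analysis.Analysis"
begin

definition wmeasure :: "('a::euclidean_space \<Rightarrow> real) \<Rightarrow> 'a measure" where
  "wmeasure w = density lborel (\<lambda>z. ennreal (w z))"

definition domain :: "('a::euclidean_space) set \<Rightarrow> bool" where
  "domain \<Omega> \<longleftrightarrow> open \<Omega> \<and> connected \<Omega> \<and> \<Omega> \<noteq> {}"

definition balls_in :: "('a::euclidean_space) set \<Rightarrow> 'a set set" where
  "balls_in \<Omega> = {ball x \<rho> | x \<rho>. 0 < \<rho> \<and> ball x \<rho> \<subseteq> \<Omega>}"

text \<open>Muckenhoupt A_r condition on Omega (r > 1): the supremum over balls
  B in Omega of (avg_B w) (avg_B w^(1/(1-r)))^(r-1) is finite; both averages
  are required to be finite (the convention w^(1/(1-r)) = infinity where w = 0).\<close>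
definition A_weight :: "real \<Rightarrow> ('a::euclidean_space) set \<Rightarrow> ('a \<Rightarrow> real) \<Rightarrow> bool" where
  "A_weight r \<Omega> w \<longleftrightarrow>
     w \<in> borel_measurable borel \<and> (\<forall>z. 0 \<le> w z) \<and>
     (\<exists>K::real. \<forall>B\<in>balls_in \<Omega>.
        (\<integral>\<^sup>+ z\<in>B. ennreal (w z) \<partial>lborel) < \<infinity> \<and>
        (\<integral>\<^sup>+ z\<in>B. (if 0 < w z then ennreal (w z powr (1 / (1 - r))) else \<infinity>) \<partial>lborel) < \<infinity> \<and>
        (enn2real (\<integral>\<^sup>+ z\<in>B. ennreal (w z) \<partial>lborel) / measure lborel B) *
        (enn2real (\<integral>\<^sup>+ z\<in>B. (if 0 < w z then ennreal (w z powr (1 / (1 - r))) else \<infinity>) \<partial>lborel)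
            / measure lborel B) powr (r - 1) \<le> K)"

definition L1_loc :: "'a measure \<Rightarrow> ('a::euclidean_space) set \<Rightarrow> ('a \<Rightarrow> real) \<Rightarrow> bool" where
  "L1_loc \<mu> \<Omega> u \<longleftrightarrow> u \<in> borel_measurable \<mu> \<and>
     (\<forall>K. compact K \<and> K \<subseteq> \<Omega> \<longrightarrow> set_integrable \<mu> K u)"

definition avg :: "'a measure \<Rightarrow> 'a set \<Rightarrow> ('a \<Rightarrow> real) \<Rightarrow> real" where
  "avg \<mu> E u = (\<integral>z\<in>E. u z \<partial>\<mu>) / measure \<mu> E"

definition osc :: "'a measure \<Rightarrow> real \<Rightarrow> 'a set \<Rightarrow> ('a \<Rightarrow> real) \<Rightarrow> ennreal" where
  "osc \<mu> s E u = (\<integral>\<^sup>+ z\<in>E. ennreal (\<bar>u z - avg \<mu> E u\<bar> powr s) \<partial>\<mu>) / emeasure \<mu> E"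

text \<open>L^s(mu)-averaging domain: bounded domain of finite mu-measure with a constant C
  such that for all u in L^1_loc(Omega, mu)
  (1/mu(Omega) int_Omega |u-u_Omega|^s)^(1/s) \<le> C sup_B (1/mu(B) int_B |u-u_B|^s)^(1/s);
  stated equivalently after raising both sides to the power s.\<close>
definition averaging_domain :: "real \<Rightarrow> ('a::euclidean_space \<Rightarrow> real) \<Rightarrow> 'a set \<Rightarrow> bool" where
  "averaging_domain s w \<Omega> \<longleftrightarrow>
     domain \<Omega> \<and> bounded \<Omega> \<and> emeasure (wmeasure w) \<Omega> < \<infinity> \<and>
     (\<exists>C::real. C \<ge> 0 \<and> (\<forall>u. L1_loc (wmeasure w) \<Omega> u \<longrightarrow>
        osc (wmeasure w) s \<Omega> u \<le> ennreal (C powr s) * (SUP B\<in>balls_in \<Omega>. osc (wmeasure w) s B u)))"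

end

theory Submission
  imports Defs
begin

lemma pow_tri:
  fixes x y z s :: real
  assumes "0 \<le> s"
  shows "\<bar>x - y\<bar> powr s \<le> 2 powr s * (\<bar>x - z\<bar> powr s + \<bar>z - y\<bar> powr s)"
proof -
  let ?m = "max \<bar>x - z\<bar> \<bar>z - y\<bar>"
  have "\<bar>x - y\<bar> \<le> 2 * ?m" by (simp add: max_def abs_if split: if_splits)
  hence "\<bar>x - y\<bar> powr s \<le> (2 * ?m) powr s" by (intro powr_mono2) (use assms in auto)
  also have "\<dots> = 2 powr s * ?m powr s" by (simp add: powr_mult)
  also have "?m powr s \<le> \<bar>x - z\<bar> powr s + \<bar>z - y\<bar> powr s"
    by (cases "\<bar>x - z\<bar> \<le> \<bar>z - y\<bar>") (auto simp: max_def)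
  hence "2 powr s * ?m powr s \<le> 2 powr s * (\<bar>x - z\<bar> powr s + \<bar>z - y\<bar> powr s)"
    by (intro mult_left_mono) auto
  finally show ?thesis .
qed

lemma tangent_ineq:
  fixes x t s :: real
  assumes "0 \<le> x" "0 < t" "1 \<le> s"
  shows "s * t powr (s - 1) * x \<le> x powr s + (s - 1) * t powr s"
proof (cases "s = 1")
  case True thus ?thesis using assms by auto
next
  case False
  hence s1: "1 < s" using assms by auto
  define q where "q = s / (s - 1)"
  have q1: "1 < q" using s1 by (simp add: q_def field_simps)
  have pq: "1 / s + 1 / q = 1" using s1 by (simp add: q_def field_simps)
  have "x * t powr (s - 1) \<le> x powr s / s + (t powr (s - 1)) powr q / q"
    by (rule Youngs_inequality) (use s1 q1 pq assms in auto)
  also have "(t powr (s - 1)) powr q = t powr s"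
    using s1 by (simp add: powr_powr q_def)
  finally have "x * t powr (s - 1) \<le> x powr s / s + t powr s / q" .
  hence "s * (x * t powr (s - 1)) \<le> s * (x powr s / s + t powr s / q)"
    using s1 by (intro mult_left_mono) auto
  also have "\<dots> = x powr s + (s - 1) * t powr s"
    using s1 by (simp add: q_def field_simps)
  finally show ?thesis by (simp add: mult_ac)
qed

lemma wmeasure_sets [simp]: "sets (wmeasure w) = sets borel"
  by (simp add: wmeasure_def)

lemma wmeasure_space [simp]: "space (wmeasure w) = UNIV"
  by (simp add: wmeasure_def)

lemma wmeasure_measurable_iff [simp]: "borel_measurable (wmeasure w) = borel_measurable borel"
  by (rule measurable_cong_sets) simp_all

lemma ball_pos:
  assumes A: "A_weight r \<Omega> w" and B: "B \<in> balls_in \<Omega>"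
  shows "0 < emeasure (wmeasure w) B" "emeasure (wmeasure w) B < \<infinity>"
proof -
  from A have wm[measurable]: "w \<in> borel_measurable borel" and w0: "\<And>z. 0 \<le> w z" by (auto simp: A_weight_def)
  from A B obtain K :: real where
     f1: "(\<integral>\<^sup>+ z\<in>B. ennreal (w z) \<partial>lborel) < \<infinity>" and
     f2: "(\<integral>\<^sup>+ z\<in>B. (if 0 < w z then ennreal (w z powr (1 / (1 - r))) else \<infinity>) \<partial>lborel) < \<infinity>"
    unfolding A_weight_def by blast
  from B obtain x \<rho> where Bx: "B = ball x \<rho>" "0 < \<rho>" by (auto simp: balls_in_def)
  have Bm[measurable]: "B \<in> sets borel" using Bx by simp
  have eq: "emeasure (wmeasure w) B = (\<integral>\<^sup>+ z\<in>B. ennreal (w z) \<partial>lborel)"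
    unfolding wmeasure_def by (subst emeasure_density) auto
  show "emeasure (wmeasure w) B < \<infinity>" using eq f1 by simp
  show "0 < emeasure (wmeasure w) B"
  proof (rule ccontr)
    assume "\<not> 0 < emeasure (wmeasure w) B"
    hence "(\<integral>\<^sup>+ z. ennreal (w z) * indicator B z \<partial>lborel) = 0" using eq by simp
    hence "AE z in lborel. ennreal (w z) * indicator B z = 0"
      by (subst (asm) nn_integral_0_iff_AE) auto
    hence ae: "AE z in lborel. (if 0 < w z then ennreal (w z powr (1 / (1 - r))) else \<infinity>) * indicator B z = \<infinity> * indicator B z"
      by eventually_elim (auto split: split_indicator simp: w0)
    have "(\<integral>\<^sup>+ z\<in>B. (if 0 < w z then ennreal (w z powr (1 / (1 - r))) else \<infinity>) \<partial>lborel)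
          = (\<integral>\<^sup>+ z. \<infinity> * indicator B z \<partial>lborel)"
      by (rule nn_integral_cong_AE[OF ae])
    also have "\<dots> = \<infinity> * emeasure lborel B" by (rule nn_integral_cmult_indicator) simp
    also have "emeasure lborel B > 0" using Bx by (simp add: emeasure_ball)
    hence "\<infinity> * emeasure lborel B = \<infinity>" by (simp add: ennreal_mult_eq_top_iff)
    finally show False using f2 by simp
  qed
qed

lemma jensen_set:
  fixes M :: "'a measure" and u :: "'a \<Rightarrow> real"
  assumes u[measurable]: "u \<in> borel_measurable M" and E[measurable]: "E \<in> sets M"
    and mE: "emeasure M E = ennreal m" and m0: "0 < m" and s: "1 \<le> s"
    and j0: "0 \<le> j" and J: "(\<integral>\<^sup>+ z\<in>E. ennreal (\<bar>u z - c\<bar> powr s) \<partial>M) = ennreal j"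
  shows "m * \<bar>avg M E u - c\<bar> powr s \<le> j"
proof -
  define f where "f z = u z - c" for z
  have Jf: "(\<integral>\<^sup>+ z. ennreal (\<bar>f z\<bar> powr s) * indicator E z \<partial>M) = ennreal j"
    using J by (simp add: f_def)
  have fm[measurable]: "f \<in> borel_measurable M" unfolding f_def by measurable
  have bnd: "\<bar>f z\<bar> \<le> 1 + \<bar>f z\<bar> powr s" for z
  proof (cases "\<bar>f z\<bar> \<le> 1")
    case True
    have "0 \<le> \<bar>f z\<bar> powr s" by simp
    thus ?thesis using True by linarith
  next
    case False
    hence "\<bar>f z\<bar> powr 1 \<le> \<bar>f z\<bar> powr s" using s by (intro powr_mono) auto
    thus ?thesis using False by simp
  qed
  have "(\<integral>\<^sup>+ z. ennreal (norm (indicator E z *\<^sub>R f z)) \<partial>M)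
      \<le> (\<integral>\<^sup>+ z. (1 * indicator E z + ennreal (\<bar>f z\<bar> powr s) * indicator E z) \<partial>M)"
  proof (intro nn_integral_mono)
    fix z
    have "ennreal \<bar>f z\<bar> \<le> ennreal (1 + \<bar>f z\<bar> powr s)" using bnd by (rule ennreal_leI)
    also have "\<dots> = 1 + ennreal (\<bar>f z\<bar> powr s)" by (simp add: ennreal_plus)
    finally show "ennreal (norm (indicator E z *\<^sub>R f z)) \<le> 1 * indicator E z + ennreal (\<bar>f z\<bar> powr s) * indicator E z"
      by (auto split: split_indicator)
  qed
  also have "\<dots> = emeasure M E + ennreal j"
    by (subst nn_integral_add) (auto simp: Jf)
  also have "\<dots> < \<infinity>" using mE by (simp add: ennreal_plus[symmetric] del: ennreal_plus)
  finally have fi: "set_integrable M E f"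
    unfolding set_integrable_def by (intro integrableI_bounded) auto
  have ci: "set_integrable M E (\<lambda>_. c)"
    unfolding set_integrable_def
    by (rule integrableI_bounded_set[where A=E and B="\<bar>c\<bar>"]) (use mE in \<open>auto split: split_indicator\<close>)
  have measE: "measure M E = m" using mE m0 by (simp add: measure_def)
  have ui: "set_integrable M E u"
    using set_integral_add(1)[OF fi ci] by (simp add: f_def)
  have "(LINT z:E|M. u z) = (LINT z:E|M. f z + c)" by (simp add: f_def)
  also have "\<dots> = (LINT z:E|M. f z) + m * c"
  proof -
    have "(LINT z:E|M. c) = m * c" using set_integral_const[OF E, of c] mE measE by simp
    thus ?thesis using set_integral_add(2)[OF fi ci] by simp
  qed
  finally have avgeq: "avg M E u - c = (LINT z:E|M. f z) / m"
    unfolding avg_def measE using m0 by (simp add: field_simps)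
  define T where "T = (LINT z:E|M. \<bar>f z\<bar>)"
  have "\<bar>LINT z:E|M. f z\<bar> \<le> T"
    using set_integral_norm_bound[OF fi] by (simp add: T_def)
  hence le_t: "\<bar>avg M E u - c\<bar> \<le> T / m" using avgeq m0 by (simp add: abs_div divide_right_mono)
  have Tnn: "ennreal T = (\<integral>\<^sup>+ z. ennreal \<bar>f z\<bar> * indicator E z \<partial>M)"
  proof -
    have "integrable M (\<lambda>z. indicator E z *\<^sub>R \<bar>f z\<bar>)"
      using set_integrable_abs[OF fi] by (simp add: set_integrable_def)
    hence "(\<integral>\<^sup>+ z. ennreal (indicator E z *\<^sub>R \<bar>f z\<bar>) \<partial>M) = T"
      unfolding T_def set_lebesgue_integral_def by (subst nn_integral_eq_integral) auto
    moreover have "(\<integral>\<^sup>+ z. ennreal (indicator E z *\<^sub>R \<bar>f z\<bar>) \<partial>M) = (\<integral>\<^sup>+ z. ennreal \<bar>f z\<bar> * indicator E z \<partial>M)"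
      by (intro nn_integral_cong) (auto split: split_indicator)
    ultimately show ?thesis by simp
  qed
  define t where "t = T / m"
  show ?thesis
  proof (cases "t \<le> 0")
    case True
    hence "avg M E u - c = 0" using le_t t_def by simp
    thus ?thesis using j0 by simp
  next
    case False
    hence t0: "0 < t" by simp
    have T0: "0 \<le> T" using t0 m0 unfolding t_def by (simp add: divide_pos_pos zero_less_divide_iff)
    have "(\<integral>\<^sup>+ z. ennreal (s * t powr (s - 1)) * (ennreal \<bar>f z\<bar> * indicator E z) \<partial>M)
        \<le> (\<integral>\<^sup>+ z. ennreal (\<bar>f z\<bar> powr s) * indicator E z + ennreal ((s - 1) * t powr s) * indicator E z \<partial>M)"
    proof (intro nn_integral_mono)
      fix z
      have "s * t powr (s - 1) * \<bar>f z\<bar> \<le> \<bar>f z\<bar> powr s + (s - 1) * t powr s"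
        by (rule tangent_ineq) (use t0 s in auto)
      hence "ennreal (s * t powr (s - 1) * \<bar>f z\<bar>) \<le> ennreal (\<bar>f z\<bar> powr s) + ennreal ((s - 1) * t powr s)"
      proof -
        have "ennreal (s * t powr (s - 1) * \<bar>f z\<bar>) \<le> ennreal (\<bar>f z\<bar> powr s + (s - 1) * t powr s)"
          by (rule ennreal_leI) fact
        also have "\<dots> = ennreal (\<bar>f z\<bar> powr s) + ennreal ((s - 1) * t powr s)"
          using s t0 by (intro ennreal_plus) auto
        finally show ?thesis .
      qed
      thus "ennreal (s * t powr (s - 1)) * (ennreal \<bar>f z\<bar> * indicator E z)
          \<le> ennreal (\<bar>f z\<bar> powr s) * indicator E z + ennreal ((s - 1) * t powr s) * indicator E z"
        using s t0 by (auto split: split_indicator simp: ennreal_mult[symmetric])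
    qed
    also have "\<dots> = ennreal j + ennreal ((s - 1) * t powr s) * ennreal m"
      by (subst nn_integral_add) (auto simp: Jf nn_integral_cmult_indicator mE)
    finally have "ennreal (s * t powr (s - 1)) * ennreal T \<le> ennreal j + ennreal ((s - 1) * t powr s) * ennreal m"
      by (subst (asm) nn_integral_cmult) (auto simp: Tnn)
    hence "ennreal (s * t powr (s - 1) * T) \<le> ennreal (j + (s - 1) * t powr s * m)"
      using s t0 m0 j0 T0 by (simp add: ennreal_mult[symmetric] ennreal_plus[symmetric] del: ennreal_plus)
    hence ineq: "s * t powr (s - 1) * T \<le> j + (s - 1) * t powr s * m"
      using s t0 m0 j0 by (subst (asm) ennreal_le_iff) auto
    have "t powr (s - 1) * T = t powr s * m"
      using t0 m0 by (simp add: t_def powr_diff field_simps)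
    hence "s * (t powr s * m) \<le> j + (s - 1) * (t powr s * m)" using ineq
      by (metis mult.assoc mult.commute)
    hence "t powr s * m \<le> j" by (simp add: algebra_simps)
    moreover have "\<bar>avg M E u - c\<bar> powr s \<le> t powr s"
      using le_t t_def s by (intro powr_mono2) auto
    ultimately show ?thesis using m0
      by (smt (verit, best) mult.commute mult_left_mono)
  qed
qed

lemma enn_pt:
  fixes x a b c :: real
  assumes "0 \<le> a" "0 \<le> b" "0 \<le> c" "x \<le> c * (a + b)"
  shows "ennreal x \<le> ennreal c * (ennreal a + ennreal b)"
proof -
  have "ennreal x \<le> ennreal (c * (a + b))" using assms(4) by (rule ennreal_leI)
  also have "\<dots> = ennreal c * (ennreal a + ennreal b)"
    using assms by (simp add: ennreal_mult ennreal_plus)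
  finally show ?thesis .
qed

lemma core:
  fixes M :: "'a measure" and u :: "'a \<Rightarrow> real"
  assumes u[measurable]: "u \<in> borel_measurable M"
    and G1[measurable]: "G1 \<in> sets M" and G2[measurable]: "G2 \<in> sets M" and B0[measurable]: "B0 \<in> sets M"
    and B0sub: "B0 \<subseteq> G1" "B0 \<subseteq> G2"
    and mB: "emeasure M B0 = ennreal \<beta>" and \<beta>0: "0 < \<beta>"
    and mG: "emeasure M (G1 \<union> G2) = ennreal m" and m0: "0 < m"
    and s: "1 \<le> s"
    and I1: "(\<integral>\<^sup>+ z\<in>G1. ennreal (\<bar>u z - a1\<bar> powr s) \<partial>M) = ennreal i1" and i10: "0 \<le> i1"
    and I2: "(\<integral>\<^sup>+ z\<in>G2. ennreal (\<bar>u z - a2\<bar> powr s) \<partial>M) = ennreal i2" and i20: "0 \<le> i2"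
  shows "(\<integral>\<^sup>+ z\<in>G1 \<union> G2. ennreal (\<bar>u z - avg M (G1 \<union> G2) u\<bar> powr s) \<partial>M)
     \<le> ennreal (2 powr (s + 1) * (1 + 2 powr s + 2 powr s * 2 powr s * m / \<beta>) * (i1 + i2))"
proof -
  define G where "G = G1 \<union> G2"
  have Gm[measurable]: "G \<in> sets M" unfolding G_def by simp
  define D where "D = \<bar>a1 - a2\<bar> powr s"
  have D0: "0 \<le> D" unfolding D_def by simp
  define c where "c = 2 powr s"
  have c1: "1 \<le> c" unfolding c_def using s by (intro ge_one_powr_ge_zero) auto
  define X1 where "X1 z = \<bar>u z - a1\<bar> powr s" for z
  define X2 where "X2 z = \<bar>u z - a2\<bar> powr s" for z
  have X1m[measurable]: "X1 \<in> borel_measurable M" unfolding X1_def by measurable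
  have X2m[measurable]: "X2 \<in> borel_measurable M" unfolding X2_def by measurable
  have I1': "(\<integral>\<^sup>+ z. ennreal (X1 z) * indicator G1 z \<partial>M) = ennreal i1" using I1 by (simp add: X1_def)
  have I2': "(\<integral>\<^sup>+ z. ennreal (X2 z) * indicator G2 z \<partial>M) = ennreal i2" using I2 by (simp add: X2_def)
  have "emeasure M G2 \<le> emeasure M G" unfolding G_def by (intro emeasure_mono) auto
  hence "emeasure M G2 < \<infinity>" using mG by (simp add: G_def) (meson ennreal_less_top le_less_trans)
  then obtain m2 where mG2: "emeasure M G2 = ennreal m2" and m20: "0 \<le> m2"
  proof -
    have "emeasure M G2 = ennreal (measure M G2)"
      using \<open>emeasure M G2 < \<infinity>\<close> by (intro emeasure_eq_ennreal_measure) simp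
    thus ?thesis using that by simp
  qed
  have "ennreal m2 \<le> ennreal m" using \<open>emeasure M G2 \<le> emeasure M G\<close> mG2 mG by (simp add: G_def)
  hence m2m: "m2 \<le> m" using m0 by (simp add: ennreal_le_iff)
  have "ennreal (\<beta> * D) = (\<integral>\<^sup>+ z. ennreal D * indicator B0 z \<partial>M)"
    using mB \<beta>0 D0 by (simp add: nn_integral_cmult_indicator ennreal_mult mult.commute)
  also have "\<dots> \<le> (\<integral>\<^sup>+ z. ennreal c * (ennreal (X1 z) * indicator G1 z + ennreal (X2 z) * indicator G2 z) \<partial>M)"
  proof (intro nn_integral_mono)
    fix z
    show "ennreal D * indicator B0 z \<le> ennreal c * (ennreal (X1 z) * indicator G1 z + ennreal (X2 z) * indicator G2 z)"
    proof (cases "z \<in> B0")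
      case True
      have "D \<le> c * (X1 z + X2 z)"
        using pow_tri[of s a1 a2 "u z"] s unfolding D_def c_def X1_def X2_def
        by (simp add: abs_minus_commute)
      hence "ennreal D \<le> ennreal c * (ennreal (X1 z) + ennreal (X2 z))"
        by (intro enn_pt) (auto simp: X1_def X2_def c_def)
      moreover have "z \<in> G1" "z \<in> G2" using True B0sub by auto
      ultimately show ?thesis using True by simp
    qed simp
  qed
  also have "\<dots> = ennreal c * (ennreal i1 + ennreal i2)"
    by (subst nn_integral_cmult) (auto simp: nn_integral_add I1' I2')
  also have "\<dots> = ennreal (c * (i1 + i2))" using c1 i10 i20 by (simp add: ennreal_mult ennreal_plus)
  finally have stepC: "\<beta> * D \<le> c * (i1 + i2)"
    using c1 i10 i20 by (subst (asm) ennreal_le_iff) auto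
  have "(\<integral>\<^sup>+ z. ennreal (X1 z) * indicator G z \<partial>M)
      \<le> (\<integral>\<^sup>+ z. ennreal (X1 z) * indicator G1 z + ennreal c * (ennreal (X2 z) * indicator G2 z + ennreal D * indicator G2 z) \<partial>M)"
  proof (intro nn_integral_mono)
    fix z
    have "X1 z \<le> c * (X2 z + D)"
      using pow_tri[of s "u z" a1 a2] s unfolding D_def c_def X1_def X2_def
      by (simp add: abs_minus_commute)
    hence "ennreal (X1 z) \<le> ennreal c * (ennreal (X2 z) + ennreal D)"
      by (intro enn_pt) (auto simp: X2_def c_def D0)
    thus "ennreal (X1 z) * indicator G z \<le> ennreal (X1 z) * indicator G1 z + ennreal c * (ennreal (X2 z) * indicator G2 z + ennreal D * indicator G2 z)"
      by (auto simp: G_def split: split_indicator simp: distrib_left)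
  qed
  also have "\<dots> = ennreal i1 + ennreal c * (ennreal i2 + ennreal D * ennreal m2)"
    by (subst nn_integral_add) (auto simp: nn_integral_add nn_integral_cmult I1' I2' nn_integral_cmult_indicator mG2)
  also have "\<dots> = ennreal (i1 + c * (i2 + D * m2))"
    using c1 i10 i20 D0 m20 by (simp add: ennreal_mult ennreal_plus)
  finally have Jle: "(\<integral>\<^sup>+ z. ennreal (X1 z) * indicator G z \<partial>M) \<le> ennreal (i1 + c * (i2 + D * m2))" .
  then obtain j where J: "(\<integral>\<^sup>+ z. ennreal (X1 z) * indicator G z \<partial>M) = ennreal j" and j0: "0 \<le> j"
    and jle: "j \<le> i1 + c * (i2 + D * m2)"
  proof -
    have "(\<integral>\<^sup>+ z. ennreal (X1 z) * indicator G z \<partial>M) \<noteq> \<infinity>"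
      using le_less_trans[OF Jle ennreal_less_top] by simp
    then obtain j where "(\<integral>\<^sup>+ z. ennreal (X1 z) * indicator G z \<partial>M) = ennreal j" "0 \<le> j"
      by (cases "(\<integral>\<^sup>+ z. ennreal (X1 z) * indicator G z \<partial>M)" rule: ennreal_cases) auto
    moreover have "j \<le> i1 + c * (i2 + D * m2)"
    proof -
      have "0 \<le> i1 + c * (i2 + D * m2)" using c1 i10 i20 D0 m20 by simp
      thus ?thesis using Jle calculation(1) by (simp add: ennreal_le_iff)
    qed
    ultimately show ?thesis by (rule that)
  qed
  define a where "a = avg M G u"
  have jens: "m * \<bar>a - a1\<bar> powr s \<le> j"
    unfolding a_def
    by (rule jensen_set[OF u Gm mG[folded G_def] m0 s j0]) (use J in \<open>simp add: X1_def\<close>)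
  have "(\<integral>\<^sup>+ z. ennreal (\<bar>u z - a\<bar> powr s) * indicator G z \<partial>M)
      \<le> (\<integral>\<^sup>+ z. ennreal c * (ennreal (X1 z) * indicator G z + ennreal (\<bar>a1 - a\<bar> powr s) * indicator G z) \<partial>M)"
  proof (intro nn_integral_mono)
    fix z
    have "\<bar>u z - a\<bar> powr s \<le> c * (X1 z + \<bar>a1 - a\<bar> powr s)"
      using pow_tri[of s "u z" a a1] s unfolding c_def X1_def by simp
    hence "ennreal (\<bar>u z - a\<bar> powr s) \<le> ennreal c * (ennreal (X1 z) + ennreal (\<bar>a1 - a\<bar> powr s))"
      by (intro enn_pt) (auto simp: X1_def c_def)
    thus "ennreal (\<bar>u z - a\<bar> powr s) * indicator G z \<le> ennreal c * (ennreal (X1 z) * indicator G z + ennreal (\<bar>a1 - a\<bar> powr s) * indicator G z)"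
      by (auto split: split_indicator)
  qed
  also have "\<dots> = ennreal c * (ennreal j + ennreal (\<bar>a1 - a\<bar> powr s) * ennreal m)"
    by (subst nn_integral_cmult) (auto simp: nn_integral_add J nn_integral_cmult_indicator mG[folded G_def])
  also have "\<dots> = ennreal (c * (j + \<bar>a1 - a\<bar> powr s * m))"
    using c1 j0 m0 by (simp add: ennreal_mult ennreal_plus)
  also have "c * (j + \<bar>a1 - a\<bar> powr s * m) \<le> 2 powr (s + 1) * (1 + c + c * c * m / \<beta>) * (i1 + i2)"
  proof -
    have "\<bar>a1 - a\<bar> powr s * m \<le> j" using jens by (simp add: abs_minus_commute mult.commute)
    hence cj: "c * (j + \<bar>a1 - a\<bar> powr s * m) \<le> 2 * c * j" using c1 by (simp add: algebra_simps)
    have "D * m2 \<le> D * m" using D0 m2m by (simp add: mult_left_mono)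
    also have "D * m = (m / \<beta>) * (\<beta> * D)" using \<beta>0 by simp
    also have "\<dots> \<le> (m / \<beta>) * (c * (i1 + i2))" using stepC m0 \<beta>0 by (intro mult_left_mono) auto
    finally have Dm: "D * m2 \<le> (m / \<beta>) * (c * (i1 + i2))" .
    have "j \<le> i1 + c * i2 + c * ((m / \<beta>) * (c * (i1 + i2)))"
      using jle Dm c1 by (smt (verit, best) distrib_left mult_left_mono)
    also have "\<dots> \<le> (1 + c + c * c * m / \<beta>) * (i1 + i2)"
    proof -
      define q where "q = c * c * m / \<beta>"
      have e: "c * ((m / \<beta>) * (c * (i1 + i2))) = q * (i1 + i2)" unfolding q_def using \<beta>0 by (simp add: field_simps)
      have "0 \<le> c * i1" using c1 i10 by simp
      hence "i1 + c * i2 + q * (i1 + i2) \<le> (1 + c + q) * (i1 + i2)" using i20 by (simp add: algebra_simps)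
      thus ?thesis unfolding e q_def by simp
    qed
    finally have A: "2 * c * j \<le> 2 * c * ((1 + c + c * c * m / \<beta>) * (i1 + i2))"
      using c1 by (intro mult_left_mono) auto
    have B: "2 * c = 2 powr (s + 1)" unfolding c_def by (simp add: powr_add)
    have "c * (j + \<bar>a1 - a\<bar> powr s * m) \<le> 2 * c * ((1 + c + c * c * m / \<beta>) * (i1 + i2))"
      using cj A by linarith
    also have "\<dots> = 2 powr (s + 1) * (1 + c + c * c * m / \<beta>) * (i1 + i2)"
      unfolding B[symmetric] by (simp add: mult_ac)
    finally show ?thesis .
  qed
  hence "ennreal (c * (j + \<bar>a1 - a\<bar> powr s * m)) \<le> ennreal (2 powr (s + 1) * (1 + c + c * c * m / \<beta>) * (i1 + i2))"
    by (rule ennreal_leI)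
  finally show ?thesis unfolding G_def a_def c_def .
qed

lemma balls_in_mono: "A \<subseteq> B \<Longrightarrow> balls_in A \<subseteq> balls_in B"
  unfolding balls_in_def by auto

lemma piece:
  fixes \<mu> :: "'a::euclidean_space measure"
  assumes C: "\<forall>u. L1_loc \<mu> Gi u \<longrightarrow> osc \<mu> s Gi u \<le> ennreal (Ci powr s) * (SUP B\<in>balls_in Gi. osc \<mu> s B u)"
    and sub: "Gi \<subseteq> G" and L: "L1_loc \<mu> G u"
    and M: "(SUP B\<in>balls_in G. osc \<mu> s B u) = ennreal Mr" and Mr0: "0 \<le> Mr"
    and mGi: "emeasure \<mu> Gi = ennreal mi" and mi0: "0 < mi"
  shows "\<exists>i. (\<integral>\<^sup>+ z\<in>Gi. ennreal (\<bar>u z - avg \<mu> Gi u\<bar> powr s) \<partial>\<mu>) = ennreal i \<and> 0 \<le> i \<and> i \<le> Ci powr s * Mr * mi"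
proof -
  have Li: "L1_loc \<mu> Gi u" using L sub unfolding L1_loc_def by auto
  have "(SUP B\<in>balls_in Gi. osc \<mu> s B u) \<le> (SUP B\<in>balls_in G. osc \<mu> s B u)"
    by (rule SUP_subset_mono[OF balls_in_mono[OF sub]]) simp
  hence "osc \<mu> s Gi u \<le> ennreal (Ci powr s) * ennreal Mr"
    using C Li M by (metis mult_left_mono order_trans zero_le)
  also have "\<dots> = ennreal (Ci powr s * Mr)" using Mr0 by (simp add: ennreal_mult)
  finally have oscle: "osc \<mu> s Gi u \<le> ennreal (Ci powr s * Mr)" .
  define I where "I = (\<integral>\<^sup>+ z\<in>Gi. ennreal (\<bar>u z - avg \<mu> Gi u\<bar> powr s) \<partial>\<mu>)"
  have "I = osc \<mu> s Gi u * ennreal mi"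
    unfolding osc_def I_def mGi using mi0 by (simp add: ennreal_divide_times)
  also have "\<dots> \<le> ennreal (Ci powr s * Mr) * ennreal mi" using oscle by (rule mult_right_mono) simp
  also have "\<dots> = ennreal (Ci powr s * Mr * mi)" by (rule ennreal_mult[symmetric]) (use Mr0 mi0 in auto)
  finally have Ile: "I \<le> ennreal (Ci powr s * Mr * mi)" .
  hence "I \<noteq> \<infinity>" using le_less_trans[OF Ile ennreal_less_top] by simp
  then obtain i where Ii: "I = ennreal i" "0 \<le> i" by (cases I rule: ennreal_cases) auto
  have "0 \<le> Ci powr s * Mr * mi" using Mr0 mi0 by simp
  hence "i \<le> Ci powr s * Mr * mi" using Ile Ii by (simp add: ennreal_le_iff)
  thus ?thesis using Ii unfolding I_def by blast
qed

theorem mainTheorem11: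
  fixes w :: "'a::euclidean_space \<Rightarrow> real" and G1 G2 :: "'a set" and s r :: real
  assumes "1 \<le> s" and "1 < r"
    and "averaging_domain s w G1" and "averaging_domain s w G2"
    and "G1 \<inter> G2 \<noteq> {}"
    and "A_weight r (G1 \<union> G2) w"
  shows "averaging_domain s w (G1 \<union> G2)"
proof -
  note s = assms(1)
  define \<mu> where "\<mu> = wmeasure w"
  define G where "G = G1 \<union> G2"
  have A: "A_weight r G w" using assms(6) by (simp add: G_def)
  from assms(3) obtain C1 where d1: "domain G1" "bounded G1" "emeasure \<mu> G1 < \<infinity>" and C10: "C1 \<ge> 0"
    and C1: "\<forall>u. L1_loc \<mu> G1 u \<longrightarrow> osc \<mu> s G1 u \<le> ennreal (C1 powr s) * (SUP B\<in>balls_in G1. osc \<mu> s B u)"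
    unfolding averaging_domain_def \<mu>_def by blast
  from assms(4) obtain C2 where d2: "domain G2" "bounded G2" "emeasure \<mu> G2 < \<infinity>" and C20: "C2 \<ge> 0"
    and C2: "\<forall>u. L1_loc \<mu> G2 u \<longrightarrow> osc \<mu> s G2 u \<le> ennreal (C2 powr s) * (SUP B\<in>balls_in G2. osc \<mu> s B u)"
    unfolding averaging_domain_def \<mu>_def by blast
  have o1: "open G1" and o2: "open G2" using d1 d2 by (auto simp: domain_def)
  have G1m[measurable]: "G1 \<in> sets \<mu>" and G2m[measurable]: "G2 \<in> sets \<mu>"
    using o1 o2 by (auto simp: \<mu>_def)
  have Gm[measurable]: "G \<in> sets \<mu>" unfolding G_def by simp
  have domG: "domain G"
    using d1 d2 assms(5) unfolding domain_def G_def by (auto intro: connected_Un)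
  have bG: "bounded G" using d1 d2 unfolding G_def by simp
  have subadd: "emeasure \<mu> G \<le> emeasure \<mu> G1 + emeasure \<mu> G2"
    unfolding G_def by (rule emeasure_subadditive) auto
  have "emeasure \<mu> G1 + emeasure \<mu> G2 < \<infinity>" using d1 d2 by simp
  hence finG: "emeasure \<mu> G < \<infinity>" by (rule le_less_trans[OF subadd])
  obtain x0 where x0: "x0 \<in> G1 \<inter> G2" using assms(5) by blast
  obtain \<rho> where \<rho>: "0 < \<rho>" "ball x0 \<rho> \<subseteq> G1 \<inter> G2"
    using open_contains_ball[of "G1 \<inter> G2"] o1 o2 x0 by blast
  define B0 where "B0 = ball x0 \<rho>"
  have B0in: "B0 \<in> balls_in G" unfolding balls_in_def B0_def G_def using \<rho> by blast
  have B0m[measurable]: "B0 \<in> sets \<mu>" unfolding B0_def \<mu>_def by simp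
  have posB: "0 < emeasure \<mu> B0" and finB: "emeasure \<mu> B0 < \<infinity>"
    using ball_pos[OF A B0in] by (auto simp: \<mu>_def)
  define \<beta> where "\<beta> = measure \<mu> B0"
  have mB: "emeasure \<mu> B0 = ennreal \<beta>" unfolding \<beta>_def using finB by (intro emeasure_eq_ennreal_measure) simp
  have \<beta>0: "0 < \<beta>" using posB mB by simp
  define m where "m = measure \<mu> G"
  have mG: "emeasure \<mu> G = ennreal m" unfolding m_def using finG by (intro emeasure_eq_ennreal_measure) simp
  have "emeasure \<mu> B0 \<le> emeasure \<mu> G" using \<rho> by (intro emeasure_mono) (auto simp: B0_def G_def)
  hence "0 < ennreal m" using posB mG by (metis less_le_trans)
  hence m0: "0 < m" by simp
  have "emeasure \<mu> B0 \<le> emeasure \<mu> G1" using \<rho> by (intro emeasure_mono) (auto simp: B0_def)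
  hence pos1: "0 < emeasure \<mu> G1" using posB by simp
  have "emeasure \<mu> B0 \<le> emeasure \<mu> G2" using \<rho> by (intro emeasure_mono) (auto simp: B0_def)
  hence pos2: "0 < emeasure \<mu> G2" using posB by simp
  define m1 where "m1 = measure \<mu> G1"
  have mG1: "emeasure \<mu> G1 = ennreal m1" unfolding m1_def using d1 by (intro emeasure_eq_ennreal_measure) simp
  have m10: "0 < m1" using pos1 mG1 by simp
  define m2 where "m2 = measure \<mu> G2"
  have mG2: "emeasure \<mu> G2 = ennreal m2" unfolding m2_def using d2 by (intro emeasure_eq_ennreal_measure) simp
  have m20: "0 < m2" using pos2 mG2 by simp
  have m1m: "m1 \<le> m"
  proof -
    have "emeasure \<mu> G1 \<le> emeasure \<mu> G" by (intro emeasure_mono) (auto simp: G_def)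
    thus ?thesis using mG1 mG m0 by (simp add: ennreal_le_iff)
  qed
  have m2m: "m2 \<le> m"
  proof -
    have "emeasure \<mu> G2 \<le> emeasure \<mu> G" by (intro emeasure_mono) (auto simp: G_def)
    thus ?thesis using mG2 mG m0 by (simp add: ennreal_le_iff)
  qed
  define K where "K = 2 powr (s + 1) * (1 + 2 powr s + 2 powr s * 2 powr s * m / \<beta>)"
  have K0: "0 \<le> K" unfolding K_def using m0 \<beta>0 by simp
  define L where "L = K * (C1 powr s + C2 powr s) + 1"
  have L1: "1 \<le> L" unfolding L_def using K0 by simp
  define C where "C = L powr (1 / s)"
  have CL: "C powr s = L" unfolding C_def using L1 s by (simp add: powr_powr)
  have C0: "0 \<le> C" unfolding C_def by simp
  have main: "osc \<mu> s G u \<le> ennreal (C powr s) * (SUP B\<in>balls_in G. osc \<mu> s B u)"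
    if Lu: "L1_loc \<mu> G u" for u
  proof (cases "(SUP B\<in>balls_in G. osc \<mu> s B u) = \<infinity>")
    case True
    have "ennreal (C powr s) * \<infinity> = \<infinity>" using CL L1 by (simp add: ennreal_mult_top)
    thus ?thesis unfolding True by simp
  next
    case False
    then obtain Mr where M: "(SUP B\<in>balls_in G. osc \<mu> s B u) = ennreal Mr" and Mr0: "0 \<le> Mr"
      by (cases "(SUP B\<in>balls_in G. osc \<mu> s B u)" rule: ennreal_cases) auto
    have um[measurable]: "u \<in> borel_measurable \<mu>" using Lu by (simp add: L1_loc_def)
    obtain i1 where I1: "(\<integral>\<^sup>+ z\<in>G1. ennreal (\<bar>u z - avg \<mu> G1 u\<bar> powr s) \<partial>\<mu>) = ennreal i1"
      and i10: "0 \<le> i1" and i1le: "i1 \<le> C1 powr s * Mr * m1"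
      using piece[OF C1 _ Lu M Mr0 mG1 m10] by (auto simp: G_def)
    obtain i2 where I2: "(\<integral>\<^sup>+ z\<in>G2. ennreal (\<bar>u z - avg \<mu> G2 u\<bar> powr s) \<partial>\<mu>) = ennreal i2"
      and i20: "0 \<le> i2" and i2le: "i2 \<le> C2 powr s * Mr * m2"
      using piece[OF C2 _ Lu M Mr0 mG2 m20] by (auto simp: G_def)
    have F: "(\<integral>\<^sup>+ z\<in>G. ennreal (\<bar>u z - avg \<mu> G u\<bar> powr s) \<partial>\<mu>) \<le> ennreal (K * (i1 + i2))"
      using core[OF um G1m G2m B0m _ _ mB \<beta>0 mG[unfolded G_def] m0 s I1 i10 I2 i20] \<rho>
      unfolding K_def G_def B0_def by auto
    have "i1 + i2 \<le> (C1 powr s + C2 powr s) * Mr * m"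
    proof -
      have "C1 powr s * Mr * m1 \<le> C1 powr s * Mr * m" using m1m Mr0 by (intro mult_left_mono) auto
      moreover have "C2 powr s * Mr * m2 \<le> C2 powr s * Mr * m" using m2m Mr0 by (intro mult_left_mono) auto
      ultimately show ?thesis using i1le i2le by (simp add: algebra_simps)
    qed
    hence "K * (i1 + i2) \<le> K * ((C1 powr s + C2 powr s) * Mr * m)" using K0 by (rule mult_left_mono)
    also have "\<dots> \<le> L * Mr * m" unfolding L_def using Mr0 m0 by (simp add: algebra_simps)
    finally have "ennreal (K * (i1 + i2)) \<le> ennreal (L * Mr * m)" by (rule ennreal_leI)
    with F have "osc \<mu> s G u \<le> ennreal (L * Mr * m) / ennreal m"
      unfolding osc_def mG by (intro divide_right_mono_ennreal) (rule order_trans)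
    also have "\<dots> = ennreal (L * Mr)" using m0 L1 Mr0 by (simp add: divide_ennreal)
    also have "\<dots> = ennreal (C powr s) * ennreal Mr" using CL L1 Mr0 by (simp add: ennreal_mult)
    finally show ?thesis using M by simp
  qed
  show ?thesis
    unfolding averaging_domain_def
    using domG bG finG C0 main unfolding G_def \<mu>_def by blast
qed

end
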